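(* Let $X$ be a digraph and $S\subset V(X)$ such that every pair $x\notin S$, $y\in S$ joined by an arc (in either direction) forms a digon. Then $X$ and the digraph obtained from $X$ by replacing each such digon $\{x,y\}$ ($x\notin S$, $y\in S$) by the single arc $xy$ have the same $H$-spectrum.
   Context: A digraph $X$ has a finite vertex set and an arc set of ordered pairs of distinct vertices; $\{x,y\}$ is a digon if both $xy,yx$ are arcs. $H(X)$ has $(u,v)$-entry $1$ if $uv$ and $vu$ are arcs, $i$ if only $uv$ is an arc, $-i$ if only $vu$ is an arc, and $0$ otherwise; two digraphs have the same $H$-spectrum if their Hermitian adjacency matrices have the same characteristic polynomial. *)

theory Defs
  imports "Jordan_Normal_Form.Char_Poly"
begin

definition digraph :: "nat \<Rightarrow> (nat \<times> nat) set \<Rightarrow> bool" where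
  "digraph n A \<longleftrightarrow> A \<subseteq> {0..<n} \<times> {0..<n} \<and> (\<forall>x. (x, x) \<notin> A)"

definition herm_adj :: "nat \<Rightarrow> (nat \<times> nat) set \<Rightarrow> complex mat" where
  "herm_adj n A = mat n n (\<lambda>(u, v).
     if (u, v) \<in> A \<and> (v, u) \<in> A then 1
     else if (u, v) \<in> A then \<i>
     else if (v, u) \<in> A then - \<i>
     else 0)"

end

theory Submission
  imports Defs
begin

theorem proposition8p3:
  fixes n :: nat and A :: "(nat \<times> nat) set" and S :: "nat set"
  assumes "digraph n A"
    and "S \<subseteq> {0..<n}"
    and "\<And>x y. x \<in> {0..<n} \<Longrightarrow> x \<notin> S \<Longrightarrow> y \<in> S \<Longrightarrow>
           (x, y) \<in> A \<or> (y, x) \<in> A \<Longrightarrow> (x, y) \<in> A \<and> (y, x) \<in> A"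
  shows "char_poly (herm_adj n A) =
         char_poly (herm_adj n (A - {(y, x). y \<in> S \<and> x \<in> {0..<n} \<and> x \<notin> S}))"
proof (rule char_poly_similar)
  let ?B = "herm_adj n (A - {(y, x). y \<in> S \<and> x \<in> {0..<n} \<and> x \<notin> S})"
  define f :: "nat \<Rightarrow> complex" where "f = (\<lambda>i. if i \<in> S then 1 else - \<i>)"
  define g :: "nat \<Rightarrow> complex" where "g = (\<lambda>i. if i \<in> S then 1 else \<i>)"
  let ?P = "mat_diag n f" and ?Q = "mat_diag n g"
  have B: "?B \<in> carrier_mat n n" by (simp add: herm_adj_def)
  have fg: "(\<lambda>i. f i * g i) = (\<lambda>_. 1)" "(\<lambda>i. g i * f i) = (\<lambda>_. 1)"
    by (auto simp: f_def g_def)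
  have PQ: "?P * ?Q = 1\<^sub>m n" "?Q * ?P = 1\<^sub>m n"
    by (simp_all only: mat_diag_diag fg mat_diag_one)
  have "?P * ?B * ?Q = mat n n (\<lambda>(i,j). f i * ?B $$ (i,j) * g j)"
    by (subst mat_diag_mult_left[OF B], subst mat_diag_mult_right[of _ n], auto intro!: eq_matI)
  also have "\<dots> = herm_adj n A"
  proof (rule eq_matI)
    fix i j assume ij: "i < dim_row (herm_adj n A)" "j < dim_col (herm_adj n A)"
    hence ij': "i < n" "j < n" by (auto simp: herm_adj_def)
    show "mat n n (\<lambda>(i,j). f i * ?B $$ (i,j) * g j) $$ (i, j) = herm_adj n A $$ (i, j)"
      using ij' assms(3)[of i j] assms(3)[of j i]
      by (auto simp: herm_adj_def f_def g_def)
  qed (auto simp: herm_adj_def)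
  finally have eq: "herm_adj n A = ?P * ?B * ?Q" by simp
  have "similar_mat_wit (herm_adj n A) ?B ?P ?Q"
  proof -
    have H: "herm_adj n A \<in> carrier_mat n n" by (simp add: herm_adj_def)
    hence "dim_row (herm_adj n A) = n" by simp
    thus ?thesis using H B PQ eq unfolding similar_mat_wit_def Let_def by (simp del: mat_diag_diag)
  qed
  thus "similar_mat (herm_adj n A) ?B"
    unfolding similar_mat_def by blast
qed

end
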